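(* If a judgment aggregation rule is strategyproof (with respect to Hamming-distance preferences and any extension of them to sets of judgments satisfying requirements (R1) and (R2)), then it satisfies neither the maximin property nor the equity property.
   Context: An agenda is a finite nonempty list $\Phi=(\phi_1,\dots,\phi_m)$ of propositional formulas; a judgment is $J\in\{0,1\}^m$, $J(\phi_k)$ its $k$-th entry. $\mathcal{J}(\Phi)\subseteq\{0,1\}^m$ is the nonempty set of admissible judgments; the agenda may be chosen so that $\mathcal{J}(\Phi)$ is any prescribed nonempty set of vectors. For a finite set of agents $N$, $|N|=n\ge2$, a profile is $\mathbf{P}=(J_1,\dots,J_n)\in\mathcal{J}(\Phi)^n$; $\mathbf{P}'=_{-i}\mathbf{P}$ means $\mathbf{P}'$ and $\mathbf{P}$ differ at most in agent $i$'s judgment. A rule $F$ maps every profile (every finite group, every agenda) to a nonempty $F(\mathbf{P})\subseteq\mathcal{J}(\Phi)$. Hamming distance $H(J,J')=\sum_k|J(\phi_k)-J'(\phi_k)|$. Preferences: agent $i$ with truthful judgment $J_i$ has $J\succeq_i J'$ iff $H(J_i,J)\le H(J_i,J')$ (strict part $\succ_i$). A preference $\mathrel{\mathring{\succeq}}_i$ over subsets of $\mathcal{J}(\Phi)$, with strict part $\mathrel{\mathring{\succ}}_i$, must satisfy (R1) $J\succeq_i J'$ iff $\{J\}\mathrel{\mathring{\succeq}}_i\{J'\}$; (R2) $X\mathrel{\mathring{\succ}}_i Y$ implies there exist $J\in X$, $J'\in Y$ with $J\succ_i J'$ and $\{J,J'\}\not\subseteq X\cap Y$. $F$ is manipulable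 by agent $i$ in $\mathbf{P}$ if there is $\mathbf{P}'=_{-i}\mathbf{P}$ with $F(\mathbf{P}')\mathrel{\mathring{\succ}}_i F(\mathbf{P})$; $F$ is strategyproof if it is not manipulable by any agent in any profile. Maximin property: for all $\mathbf{P}$ and $J\in F(\mathbf{P})$ there are no $J'\in\mathcal{J}(\Phi)$, $j\in N$ with $H(J_i,J')<H(J_j,J)$ for all $i\in N$. Equity property: for all $\mathbf{P}$ and $J\in F(\mathbf{P})$ there are no $J'\in\mathcal{J}(\Phi)$, $i',j'\in N$ with $|H(J_i,J')-H(J_j,J')|<|H(J_{i'},J)-H(J_{j'},J)|$ for all $i,j\in N$. *)

theory Defs
  imports Main
begin

text \<open>Agendas are abstract objects of a type 'g; the map adm sends an agenda to its
  nonempty set of admissible judgments (all of a common length m \<ge> 1).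
  Since the agenda can be chosen to realise any nonempty set of vectors, we
  assume adm is onto all such sets. Profiles are lists of judgments of length n;
  agent i is position i < n.\<close>

type_synonym jdg = "bool list"

definition hamming :: "jdg \<Rightarrow> jdg \<Rightarrow> nat" where
  "hamming J J' = card {k. k < length J \<and> J ! k \<noteq> J' ! k}"

definition valid_agenda_set :: "jdg set \<Rightarrow> bool" where
  "valid_agenda_set A \<longleftrightarrow> A \<noteq> {} \<and> (\<exists>m\<ge>1. \<forall>J\<in>A. length J = m)"

definition agenda_model :: "('g \<Rightarrow> jdg set) \<Rightarrow> bool" where
  "agenda_model adm \<longleftrightarrow> (\<forall>\<Phi>. valid_agenda_set (adm \<Phi>)) \<and>
     (\<forall>A. valid_agenda_set A \<longrightarrow> (\<exists>\<Phi>. adm \<Phi> = A))"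

definition is_profile :: "('g \<Rightarrow> jdg set) \<Rightarrow> 'g \<Rightarrow> nat \<Rightarrow> jdg list \<Rightarrow> bool" where
  "is_profile adm \<Phi> n P \<longleftrightarrow> n \<ge> 2 \<and> length P = n \<and> set P \<subseteq> adm \<Phi>"

definition is_rule ::
  "('g \<Rightarrow> jdg set) \<Rightarrow> ('g \<Rightarrow> jdg list \<Rightarrow> jdg set) \<Rightarrow> bool" where
  "is_rule adm F \<longleftrightarrow> (\<forall>\<Phi> n P. is_profile adm \<Phi> n P \<longrightarrow>
      F \<Phi> P \<noteq> {} \<and> F \<Phi> P \<subseteq> adm \<Phi>)"

text \<open>ext \<Phi> Ji X Y: an agent with truthful jdg Ji weakly prefers X to Y.\<close>
definition strict_ext ::
  "('g \<Rightarrow> jdg \<Rightarrow> jdg set \<Rightarrow> jdg set \<Rightarrow> bool)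
    \<Rightarrow> 'g \<Rightarrow> jdg \<Rightarrow> jdg set \<Rightarrow> jdg set \<Rightarrow> bool" where
  "strict_ext ext \<Phi> Ji X Y \<longleftrightarrow> ext \<Phi> Ji X Y \<and> \<not> ext \<Phi> Ji Y X"

definition R1 :: "('g \<Rightarrow> jdg set)
    \<Rightarrow> ('g \<Rightarrow> jdg \<Rightarrow> jdg set \<Rightarrow> jdg set \<Rightarrow> bool) \<Rightarrow> bool" where
  "R1 adm ext \<longleftrightarrow> (\<forall>\<Phi>. \<forall>Ji\<in>adm \<Phi>. \<forall>J\<in>adm \<Phi>. \<forall>J'\<in>adm \<Phi>.
      hamming Ji J \<le> hamming Ji J' \<longleftrightarrow> ext \<Phi> Ji {J} {J'})"

definition R2 :: "('g \<Rightarrow> jdg set)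
    \<Rightarrow> ('g \<Rightarrow> jdg \<Rightarrow> jdg set \<Rightarrow> jdg set \<Rightarrow> bool) \<Rightarrow> bool" where
  "R2 adm ext \<longleftrightarrow> (\<forall>\<Phi>. \<forall>Ji\<in>adm \<Phi>. \<forall>X Y. X \<subseteq> adm \<Phi> \<longrightarrow> Y \<subseteq> adm \<Phi> \<longrightarrow>
      strict_ext ext \<Phi> Ji X Y \<longrightarrow>
      (\<exists>J\<in>X. \<exists>J'\<in>Y. hamming Ji J < hamming Ji J' \<and> \<not> ({J, J'} \<subseteq> X \<inter> Y)))"

definition manipulable ::
  "('g \<Rightarrow> jdg set) \<Rightarrow> ('g \<Rightarrow> jdg \<Rightarrow> jdg set \<Rightarrow> jdg set \<Rightarrow> bool)
    \<Rightarrow> ('g \<Rightarrow> jdg list \<Rightarrow> jdg set) \<Rightarrow> 'g \<Rightarrow> nat \<Rightarrow> jdg list \<Rightarrow> nat \<Rightarrow> bool" where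
  "manipulable adm ext F \<Phi> n P i \<longleftrightarrow>
     (\<exists>J'\<in>adm \<Phi>. strict_ext ext \<Phi> (P ! i) (F \<Phi> (P[i := J'])) (F \<Phi> P))"

definition strategyproof ::
  "('g \<Rightarrow> jdg set) \<Rightarrow> ('g \<Rightarrow> jdg \<Rightarrow> jdg set \<Rightarrow> jdg set \<Rightarrow> bool)
    \<Rightarrow> ('g \<Rightarrow> jdg list \<Rightarrow> jdg set) \<Rightarrow> bool" where
  "strategyproof adm ext F \<longleftrightarrow>
     (\<forall>\<Phi> n P i. is_profile adm \<Phi> n P \<and> i < n \<longrightarrow> \<not> manipulable adm ext F \<Phi> n P i)"

definition maximin_property ::
  "('g \<Rightarrow> jdg set) \<Rightarrow> ('g \<Rightarrow> jdg list \<Rightarrow> jdg set) \<Rightarrow> bool" where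
  "maximin_property adm F \<longleftrightarrow> (\<forall>\<Phi> n P. is_profile adm \<Phi> n P \<longrightarrow> (\<forall>J\<in>F \<Phi> P.
     \<not> (\<exists>J'\<in>adm \<Phi>. \<exists>j<n. \<forall>i<n. hamming (P ! i) J' < hamming (P ! j) J)))"

definition equity_property ::
  "('g \<Rightarrow> jdg set) \<Rightarrow> ('g \<Rightarrow> jdg list \<Rightarrow> jdg set) \<Rightarrow> bool" where
  "equity_property adm F \<longleftrightarrow> (\<forall>\<Phi> n P. is_profile adm \<Phi> n P \<longrightarrow> (\<forall>J\<in>F \<Phi> P.
     \<not> (\<exists>J'\<in>adm \<Phi>. \<exists>i'<n. \<exists>j'<n. \<forall>i<n. \<forall>j<n.
         \<bar>int (hamming (P ! i) J') - int (hamming (P ! j) J')\<bar>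
           < \<bar>int (hamming (P ! i') J) - int (hamming (P ! j') J)\<bar>)))"

end

theory Submission
  imports Defs
begin

lemma hamming_list: "hamming J J' = length (filter (\<lambda>k. J!k \<noteq> J'!k) [0..<length J])"
proof -
  have "{k. k < length J \<and> J ! k \<noteq> J' ! k} = set (filter (\<lambda>k. J!k \<noteq> J'!k) [0..<length J])"
    by auto
  then show ?thesis unfolding hamming_def
    by (metis distinct_card distinct_filter distinct_upt)
qed

definition "p0 = [False,False,False,False]"
definition "p2 = [True,True,False,False]"
definition "p3 = [True,True,True,False]"
definition "p4 = [True,True,True,True]"

lemma ham:
  "hamming p2 p0 = 2" "hamming p2 p2 = 0" "hamming p2 p3 = 1" "hamming p2 p4 = 2"
  "hamming p4 p0 = 4" "hamming p4 p2 = 2" "hamming p4 p3 = 1" "hamming p4 p4 = 0"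
  "hamming p0 p0 = 0" "hamming p0 p2 = 2" "hamming p0 p3 = 3" "hamming p0 p4 = 4"
  by (simp_all add: hamming_list p0_def p2_def p3_def p4_def upt_rec)

lemma distinct_ps: "p0 \<noteq> p2" "p0 \<noteq> p3" "p0 \<noteq> p4" "p2 \<noteq> p3" "p2 \<noteq> p4" "p3 \<noteq> p4"
  by (simp_all add: p0_def p2_def p3_def p4_def)

lemma all2: "(\<forall>i<(2::nat). Q i) \<longleftrightarrow> Q 0 \<and> Q 1"
  by (metis less_2_cases numeral_2_eq_2 lessI zero_less_Suc One_nat_def)

lemma ex2: "(\<exists>i<(2::nat). Q i) \<longleftrightarrow> Q 0 \<or> Q 1"
  by (metis less_2_cases numeral_2_eq_2 lessI zero_less_Suc One_nat_def)

theorem proposition4: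
  fixes adm :: "'g \<Rightarrow> jdg set"
    and F :: "'g \<Rightarrow> jdg list \<Rightarrow> jdg set"
    and ext :: "'g \<Rightarrow> jdg \<Rightarrow> jdg set \<Rightarrow> jdg set \<Rightarrow> bool"
  assumes "agenda_model adm"
    and "is_rule adm F"
    and "R1 adm ext"
    and "R2 adm ext"
    and "strategyproof adm ext F"
  shows "\<not> maximin_property adm F \<and> \<not> equity_property adm F"
proof -
  define A where "A = {p0,p2,p3,p4}"
  have "valid_agenda_set A" unfolding valid_agenda_set_def A_def
    by (rule conjI, simp, rule exI[of _ 4]) (simp add: p0_def p2_def p3_def p4_def)
  then obtain \<Phi> where Phi: "adm \<Phi> = A" using assms(1) unfolding agenda_model_def by blast
  define P where "P = [p2,p4]"
  define P' where "P' = [p0,p4]"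
  have prof: "is_profile adm \<Phi> 2 P" "is_profile adm \<Phi> 2 P'"
    unfolding is_profile_def P_def P'_def Phi A_def by auto
  have FP: "F \<Phi> P \<noteq> {} \<and> F \<Phi> P \<subseteq> A" "F \<Phi> P' \<noteq> {} \<and> F \<Phi> P' \<subseteq> A"
    using assms(2) prof Phi unfolding is_rule_def by metis+
  have key: False if a: "F \<Phi> P \<subseteq> {p3}" and b: "F \<Phi> P' \<subseteq> {p2}"
  proof -
    have e1: "F \<Phi> P = {p3}" "F \<Phi> P' = {p2}" using a b FP by blast+
    have in2: "p2 \<in> adm \<Phi>" "p3 \<in> adm \<Phi>" "p0 \<in> adm \<Phi>" using Phi A_def by auto
    have "ext \<Phi> p2 {p2} {p3}" "\<not> ext \<Phi> p2 {p3} {p2}"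
      using assms(3) in2 ham unfolding R1_def by (metis le_refl zero_le not_one_le_zero)+
    hence "manipulable adm ext F \<Phi> 2 P 0"
      unfolding manipulable_def strict_ext_def using in2 e1
      by (intro bexI[of _ p0]) (auto simp: P_def P'_def)
    thus False using assms(5) prof unfolding strategyproof_def by auto
  qed
  have "\<not> maximin_property adm F"
  proof
    assume m: "maximin_property adm F"
    have "F \<Phi> P \<subseteq> {p3}"
    proof
      fix J assume J: "J \<in> F \<Phi> P"
      hence "\<not> (\<exists>J'\<in>adm \<Phi>. \<exists>j<2. \<forall>i<2. hamming (P ! i) J' < hamming (P ! j) J)"
        using m prof unfolding maximin_property_def by blast
      moreover have "J \<in> A" using J FP by blast
      ultimately show "J \<in> {p3}"
        unfolding A_def using Phi A_def
        by (auto simp: all2 ex2 P_def ham)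
    qed
    moreover have "F \<Phi> P' \<subseteq> {p2}"
    proof
      fix J assume J: "J \<in> F \<Phi> P'"
      hence "\<not> (\<exists>J'\<in>adm \<Phi>. \<exists>j<2. \<forall>i<2. hamming (P' ! i) J' < hamming (P' ! j) J)"
        using m prof unfolding maximin_property_def by blast
      moreover have "J \<in> A" using J FP by blast
      ultimately show "J \<in> {p2}"
        unfolding A_def using Phi A_def
        by (auto simp: all2 ex2 P'_def ham)
    qed
    ultimately show False using key by blast
  qed
  moreover have "\<not> equity_property adm F"
  proof
    assume m: "equity_property adm F"
    have "F \<Phi> P \<subseteq> {p3}"
    proof
      fix J assume J: "J \<in> F \<Phi> P"
      hence "\<not> (\<exists>J'\<in>adm \<Phi>. \<exists>i'<2. \<exists>j'<2. \<forall>i<2. \<forall>j<2.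
         \<bar>int (hamming (P ! i) J') - int (hamming (P ! j) J')\<bar>
           < \<bar>int (hamming (P ! i') J) - int (hamming (P ! j') J)\<bar>)"
        using m prof unfolding equity_property_def by blast
      moreover have "J \<in> A" using J FP by blast
      ultimately show "J \<in> {p3}"
        unfolding A_def using Phi A_def
        by (auto simp: all2 ex2 P_def ham)
    qed
    moreover have "F \<Phi> P' \<subseteq> {p2}"
    proof
      fix J assume J: "J \<in> F \<Phi> P'"
      hence "\<not> (\<exists>J'\<in>adm \<Phi>. \<exists>i'<2. \<exists>j'<2. \<forall>i<2. \<forall>j<2.
         \<bar>int (hamming (P' ! i) J') - int (hamming (P' ! j) J')\<bar>
           < \<bar>int (hamming (P' ! i') J) - int (hamming (P' ! j') J)\<bar>)"
        using m prof unfolding equity_property_def by blast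
      moreover have "J \<in> A" using J FP by blast
      ultimately show "J \<in> {p2}"
        unfolding A_def using Phi A_def
        by (auto simp: all2 ex2 P'_def ham)
    qed
    ultimately show False using key by blast
  qed
  ultimately show ?thesis by blast
qed

end
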